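(* Let $T=(t_{kl})$ be an $\mathbb{N}$-tableau of shape $\lambda$ and let $\widehat{T}$ be its image under the toggle map defined in the context. Then for every border box $(a,b)$ of $\lambda$, \[\mathrm{diag}_{\widehat{T}}(a,b)=\mathrm{rect}_T(a,b).\]
   Context: Partitions are drawn in English notation with matrix coordinates: the box in row $i$ and column $j$ is $(i,j)$, and $(1,1)$ is the upper-left box. An $\mathbb{N}$-tableau of shape $\lambda$ is an assignment of a nonnegative integer to each box of $\lambda$. A border box of $\lambda$ is a box $(i,j)$ such that $(i+1,j+1)$ is not a box; a corner box is a box $(i,j)$ such that neither $(i+1,j)$ nor $(i,j+1)$ is a box. For an $\mathbb{N}$-tableau $B=(b_{kl})$ and a box $(i,j)$, the diagonal sum is $\mathrm{diag}_B(i,j)=\sum_{k=0}^{\min(i,j)-1}b_{i-k,j-k}$ and the rectangle sum is $\mathrm{rect}_B(i,j)=\sum_{k=1}^{i}\sum_{l=1}^{j}b_{kl}$ (boxes outside the shape contributing $0$). The toggle map $T\mapsto\widehat{T}$ is defined recursively: $\widehat{\emptyset}=\emptyset$; if $T'$ is obtained from $T$ by adding a corner box $(i,j)$ (of $\mathrm{sh}(T')$) with entry $x$, then $\widehat{T'}$ is obtained from $\widehat{T}$ as follows. For $k\ge1$ let $\beta_k,\gamma_k,\alpha_k$ be the entries of $\widehat{T}$ at $(i-k,j-k)$, $(i-k+1,j-k)$, $(i-k,j-k+1)$ respectively (taken to be $0$ if the box is not in $\mathrm{sh}(T)$). Then $\widehat{T'}$ agrees with $\widehat{T}$ except that for $1\le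 k<\min(i,j)$ the entry at $(i-k,j-k)$ becomes $\max(\alpha_{k+1},\gamma_{k+1})+\min(\alpha_k,\gamma_k)-\beta_k$, and the entry at $(i,j)$ is $\max(\alpha_1,\gamma_1)+x$. This is independent of the order in which boxes are added. *)

theory Defs
  imports Main
begin

text \<open>A partition is a weakly decreasing list of positive integers (row lengths).
Boxes use 1-based matrix coordinates (row, column).\<close>

definition is_partition :: "nat list \<Rightarrow> bool" where
  "is_partition lam \<longleftrightarrow> sorted (rev lam) \<and> (\<forall>r \<in> set lam. 0 < r)"

definition boxes :: "nat list \<Rightarrow> (nat \<times> nat) set" where
  "boxes lam = {(i, j). 1 \<le> i \<and> i \<le> length lam \<and> 1 \<le> j \<and> j \<le> lam ! (i - 1)}"

definition border_box :: "nat list \<Rightarrow> nat \<Rightarrow> nat \<Rightarrow> bool" where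
  "border_box lam i j \<longleftrightarrow> (i, j) \<in> boxes lam \<and> (i + 1, j + 1) \<notin> boxes lam"

text \<open>Tableaux are functions on coordinates; only the values on the boxes of the
shape matter. Entries outside the shape are read as 0.\<close>

definition entry :: "(nat \<times> nat) set \<Rightarrow> (nat \<Rightarrow> nat \<Rightarrow> 'a::zero) \<Rightarrow> nat \<Rightarrow> nat \<Rightarrow> 'a" where
  "entry D B i j = (if (i, j) \<in> D then B i j else 0)"

definition diag_sum :: "nat list \<Rightarrow> (nat \<Rightarrow> nat \<Rightarrow> 'a::comm_monoid_add) \<Rightarrow> nat \<Rightarrow> nat \<Rightarrow> 'a" where
  "diag_sum lam B i j = (\<Sum>k<min i j. entry (boxes lam) B (i - k) (j - k))"

definition rect_sum :: "nat list \<Rightarrow> (nat \<Rightarrow> nat \<Rightarrow> 'a::comm_monoid_add) \<Rightarrow> nat \<Rightarrow> nat \<Rightarrow> 'a" where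
  "rect_sum lam B i j = (\<Sum>k=1..i. \<Sum>l=1..j. entry (boxes lam) B k l)"

text \<open>One step of the toggle map: the current image S lives on the box set D;
a corner box (i,j) with entry x is added.  Values are computed in int.\<close>

definition toggle_step :: "(nat \<times> nat) set \<Rightarrow> (nat \<Rightarrow> nat \<Rightarrow> int) \<Rightarrow> nat \<Rightarrow> nat \<Rightarrow> nat \<Rightarrow> (nat \<Rightarrow> nat \<Rightarrow> int)" where
  "toggle_step D S i j x =
     (let v = entry D S;
          \<alpha> = (\<lambda>k. v (i - k) (j - k + 1));
          \<beta> = (\<lambda>k. v (i - k) (j - k));
          \<gamma> = (\<lambda>k. v (i - k + 1) (j - k))
      in (\<lambda>p q.
           if p = i \<and> q = j then max (\<alpha> 1) (\<gamma> 1) + int x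
           else if p < i \<and> q < j \<and> i - p = j - q \<and> i - p < min i j then
             (let k = i - p in max (\<alpha> (k + 1)) (\<gamma> (k + 1)) + min (\<alpha> k) (\<gamma> k) - \<beta> k)
           else S p q))"

text \<open>Boxes of the shape listed row by row, left to right; each prefix is a partition
and each added box is a corner of the new shape.\<close>

definition box_order :: "nat list \<Rightarrow> (nat \<times> nat) list" where
  "box_order lam = concat (map (\<lambda>i. map (\<lambda>j. (i, j)) [1..<lam ! (i - 1) + 1]) [1..<length lam + 1])"

definition toggle :: "nat list \<Rightarrow> (nat \<Rightarrow> nat \<Rightarrow> nat) \<Rightarrow> (nat \<Rightarrow> nat \<Rightarrow> int)" where
  "toggle lam T = snd (fold (\<lambda>(i, j) (D, S). (insert (i, j) D, toggle_step D S i j (T i j)))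
                          (box_order lam) ({}, (\<lambda>_ _. 0)))"

end

theory Submission
  imports Defs
begin

definition dc :: "(nat \<times> nat) set \<Rightarrow> bool" where
 "dc D \<longleftrightarrow> (\<forall>p q. (p,q) \<in> D \<longrightarrow> 1 \<le> p \<and> 1 \<le> q \<and>
     (\<forall>p' q'. 1 \<le> p' \<and> p' \<le> p \<and> 1 \<le> q' \<and> q' \<le> q \<longrightarrow> (p',q') \<in> D))"

definition rpp :: "(nat \<times> nat) set \<Rightarrow> (nat \<Rightarrow> nat \<Rightarrow> int) \<Rightarrow> bool" where
 "rpp D S \<longleftrightarrow> (\<forall>p q. 0 \<le> entry D S p q) \<and>
    (\<forall>p q. (p,q+1) \<in> D \<longrightarrow> entry D S p q \<le> entry D S p (q+1)) \<and>
    (\<forall>p q. (p+1,q) \<in> D \<longrightarrow> entry D S p q \<le> entry D S (p+1) q)"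

definition dsum :: "(nat \<times> nat) set \<Rightarrow> (nat \<Rightarrow> nat \<Rightarrow> int) \<Rightarrow> nat \<Rightarrow> nat \<Rightarrow> int" where
 "dsum D S a b = (\<Sum>k<min a b. entry D S (a-k) (b-k))"

definition rsum :: "(nat \<times> nat) set \<Rightarrow> (nat \<Rightarrow> nat \<Rightarrow> nat) \<Rightarrow> nat \<Rightarrow> nat \<Rightarrow> nat" where
 "rsum D T a b = (\<Sum>k=1..a. \<Sum>l=1..b. entry D T k l)"

definition tinv :: "(nat \<Rightarrow> nat \<Rightarrow> nat) \<Rightarrow> (nat \<times> nat) set \<Rightarrow> (nat \<Rightarrow> nat \<Rightarrow> int) \<Rightarrow> bool" where
 "tinv T D S \<longleftrightarrow> dc D \<and> rpp D S \<and>
    (\<forall>a b. (a,b) \<in> D \<and> (a+1,b+1) \<notin> D \<longrightarrow> dsum D S a b = int (rsum D T a b))"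

lemma dc_down: "dc D \<Longrightarrow> (p,q) \<in> D \<Longrightarrow> 1 \<le> p' \<Longrightarrow> p' \<le> p \<Longrightarrow> 1 \<le> q' \<Longrightarrow> q' \<le> q \<Longrightarrow> (p',q') \<in> D"
  unfolding dc_def by blast

lemma dc_pos: "dc D \<Longrightarrow> (p,q) \<in> D \<Longrightarrow> 1 \<le> p \<and> 1 \<le> q"
  unfolding dc_def by blast

lemma telescope:
  fixes a g b :: "nat \<Rightarrow> int"
  shows "max (a 1) (g 1) + (\<Sum>k<n. max (a (Suc (Suc k))) (g (Suc (Suc k))) + min (a (Suc k)) (g (Suc k)) - b (Suc k))
       = (\<Sum>k<n. a (Suc k) + g (Suc k)) - (\<Sum>k<n. b (Suc k)) + max (a (Suc n)) (g (Suc n))"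
  by (induction n) (auto simp: max_def min_def)

lemma rect_rec:
  fixes f :: "nat \<Rightarrow> nat \<Rightarrow> nat"
  shows "(\<Sum>k=1..Suc a. \<Sum>l=1..Suc b. f k l) + (\<Sum>k=1..a. \<Sum>l=1..b. f k l)
       = (\<Sum>k=1..a. \<Sum>l=1..Suc b. f k l) + (\<Sum>k=1..Suc a. \<Sum>l=1..b. f k l) + f (Suc a) (Suc b)"
  by (simp add: sum.distrib)

lemma sum_extend:
  fixes f :: "nat \<Rightarrow> int"
  assumes "m' \<le> m" "\<And>k. m' \<le> k \<Longrightarrow> k < m \<Longrightarrow> f k = 0"
  shows "(\<Sum>k<m. f k) = (\<Sum>k<m'. f k)"
  using assms
proof (induction m)
  case 0 then show ?case by simp
next
  case (Suc m)
  show ?case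
  proof (cases "m' = Suc m")
    case True then show ?thesis by simp
  next
    case False
    then have "m' \<le> m" using Suc.prems by simp
    then show ?thesis using Suc.IH Suc.prems by simp
  qed
qed

context
  fixes D :: "(nat \<times> nat) set" and S :: "nat \<Rightarrow> nat \<Rightarrow> int" and i j x :: nat
  assumes dcD: "dc D" and rppD: "rpp D S" and nin: "(i,j) \<notin> D" and dcD': "dc (insert (i,j) D)"
begin

lemma ij_pos: "1 \<le> i" "1 \<le> j" using dc_pos[OF dcD'] by auto

lemma below_in: "1 \<le> p \<Longrightarrow> p \<le> i \<Longrightarrow> 1 \<le> q \<Longrightarrow> q \<le> j \<Longrightarrow> (p,q) \<in> insert (i,j) D"
  using dc_down[OF dcD', of i j] by auto

lemma below_inD: "1 \<le> p \<Longrightarrow> p \<le> i \<Longrightarrow> 1 \<le> q \<Longrightarrow> q \<le> j \<Longrightarrow> (p,q) \<noteq> (i,j) \<Longrightarrow> (p,q) \<in> D"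
  using below_in by auto

lemma above_notin: "i \<le> p \<Longrightarrow> j \<le> q \<Longrightarrow> (p,q) \<notin> D"
  using dc_down[OF dcD, of p q i j] nin ij_pos by auto

lemma v0: "entry D S 0 q = 0" "entry D S p 0 = 0"
  using dc_pos[OF dcD] by (auto simp: entry_def)

lemma vnn: "0 \<le> entry D S p q" using rppD by (simp add: rpp_def)
lemma mono_r: "(p,q+1) \<in> D \<Longrightarrow> entry D S p q \<le> entry D S p (q+1)" using rppD by (simp add: rpp_def)
lemma mono_d: "(p+1,q) \<in> D \<Longrightarrow> entry D S p q \<le> entry D S (p+1) q" using rppD by (simp add: rpp_def)

lemma unchanged:
  assumes "\<not> ((p,q) \<in> insert (i,j) D \<and> p \<le> i \<and> q \<le> j \<and> i - p = j - q)"
  shows "entry (insert (i,j) D) (toggle_step D S i j x) p q = entry D S p q"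
proof (cases "(p,q) \<in> insert (i,j) D")
  case False
  then have "(p,q) \<notin> D" by blast
  then show ?thesis using False unfolding entry_def by (simp only: if_False)
next
  case True
  have ne: "\<not> (p = i \<and> q = j)" using assms True by auto
  with True have inD: "(p,q) \<in> D" by blast
  have cond: "\<not> (p < i \<and> q < j \<and> i - p = j - q \<and> i - p < min i j)" using assms True by auto
  have "toggle_step D S i j x p q = S p q"
    unfolding toggle_step_def Let_def by (simp only: if_not_P[OF ne] if_not_P[OF cond])
  then show ?thesis using True inD unfolding entry_def by (simp only: if_True)
qed

lemma corner_val:
  "entry (insert (i,j) D) (toggle_step D S i j x) i j = max (entry D S (i-1) j) (entry D S i (j-1)) + int x"
  using ij_pos by (simp add: entry_def toggle_step_def Let_def)

lemma interior_val:
  assumes "1 \<le> k" "k < min i j"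
  shows "entry (insert (i,j) D) (toggle_step D S i j x) (i-k) (j-k) =
     max (entry D S (i-(k+1)) (j-(k+1)+1)) (entry D S (i-(k+1)+1) (j-(k+1)))
     + min (entry D S (i-k) (j-k+1)) (entry D S (i-k+1) (j-k)) - entry D S (i-k) (j-k)"
proof -
  have inn: "(i-k, j-k) \<in> insert (i,j) D" using assms by (intro below_in) auto
  have ne: "i - k \<noteq> i" using assms by auto
  have e: "i - (i - k) = k" using assms by auto
  show ?thesis using inn ne assms e by (simp add: entry_def toggle_step_def Let_def)
qed

lemma sand:
  assumes "(p,q) \<in> insert (i,j) D" "p \<le> i" "q \<le> j" "i - p = j - q"
  shows "max (entry D S (p-1) q) (entry D S p (q-1)) \<le> entry (insert (i,j) D) (toggle_step D S i j x) p q"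
    and "(p,q) \<noteq> (i,j) \<Longrightarrow> entry (insert (i,j) D) (toggle_step D S i j x) p q \<le> min (entry D S p (q+1)) (entry D S (p+1) q)"
proof -
  have pq: "1 \<le> p" "1 \<le> q" using dc_pos[OF dcD' assms(1)] by auto
  have main: "max (entry D S (p-1) q) (entry D S p (q-1)) \<le> entry (insert (i,j) D) (toggle_step D S i j x) p q
     \<and> entry (insert (i,j) D) (toggle_step D S i j x) p q \<le> min (entry D S p (q+1)) (entry D S (p+1) q)"
    if ne: "(p,q) \<noteq> (i,j)"
  proof -
    have lt: "p < i" "q < j" using assms ne by auto
    have k1: "1 \<le> i-p" using lt by arith
    have k2: "i-p < min i j" using lt pq assms(4) by arith
    have e1: "i - (i-p) = p" using lt by arith
    have e2: "j - (i-p) = q" using lt assms(4) by arith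
    have e3: "i - (i-p+1) = p-1" using lt by arith
    have e4: "j-(i-p+1)+1 = q" using lt pq assms(4) by arith
    have e5: "i-(i-p+1)+1 = p" using lt pq by arith
    have e6: "j-(i-p+1) = q-1" using lt assms(4) by arith
    have e7: "j-(i-p)+1 = q+1" using lt assms(4) by arith
    have e8: "i-(i-p)+1 = p+1" using lt by arith
    have e9: "p-1+1 = p" "q-1+1 = q" using pq by arith+
    have val: "entry (insert (i,j) D) (toggle_step D S i j x) p q =
      max (entry D S (p-1) q) (entry D S p (q-1)) + min (entry D S p (q+1)) (entry D S (p+1) q) - entry D S p q"
      using interior_val[OF k1 k2] unfolding e1 e2 e3 e4 e5 e6 e7 e8 e9 .
    have in1: "(p,q+1) \<in> D" using lt pq by (intro below_inD) auto
    have in2: "(p+1,q) \<in> D" using lt pq by (intro below_inD) auto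
    have in0: "(p,q) \<in> D" using lt pq by (intro below_inD) auto
    have m1: "entry D S p q \<le> entry D S p (q+1)" using in1 by (rule mono_r)
    have m2: "entry D S p q \<le> entry D S (p+1) q" using in2 by (rule mono_d)
    have m3: "entry D S (p-1) q \<le> entry D S (p-1+1) q" using in0 pq by (intro mono_d) simp
    have m4: "entry D S p (q-1) \<le> entry D S p (q-1+1)" using in0 pq by (intro mono_r) simp
    have l1: "max (entry D S (p-1) q) (entry D S p (q-1)) \<le> entry D S p q" using m3 m4 pq by simp
    have l2: "entry D S p q \<le> min (entry D S p (q+1)) (entry D S (p+1) q)" using m1 m2 by simp
    show ?thesis unfolding val using l1 l2 by linarith
  qed
  show "max (entry D S (p-1) q) (entry D S p (q-1)) \<le> entry (insert (i,j) D) (toggle_step D S i j x) p q"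
  proof (cases "(p,q) = (i,j)")
    case True
    then have "p = i" "q = j" by auto
    then show ?thesis using corner_val by simp
  next
    case False then show ?thesis using main by blast
  qed
  show "(p,q) \<noteq> (i,j) \<Longrightarrow> entry (insert (i,j) D) (toggle_step D S i j x) p q \<le> min (entry D S p (q+1)) (entry D S (p+1) q)"
    using main by blast
qed

lemma rpp_new: "rpp (insert (i,j) D) (toggle_step D S i j x)"
proof -
  let ?V = "entry (insert (i,j) D) (toggle_step D S i j x)"
  let ?dg = "\<lambda>p q. (p,q) \<in> insert (i,j) D \<and> p \<le> i \<and> q \<le> j \<and> i - p = j - q"
  have nn: "0 \<le> ?V p q" for p q
  proof (cases "?dg p q")
    case True
    have "0 \<le> entry D S (p-1) q" by (rule vnn)
    also have "\<dots> \<le> ?V p q" using sand(1)[of p q] True by auto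
    finally show ?thesis .
  next
    case False then show ?thesis using unchanged vnn by simp
  qed
  have hr: "?V p q \<le> ?V p (q+1)" if h: "(p,q+1) \<in> insert (i,j) D" for p q
  proof (cases "?dg p q")
    case True
    have ne: "(p,q) \<noteq> (i,j)" using h above_notin[of p "q+1"] by auto
    have nd: "\<not> ?dg p (q+1)" using True by auto
    have "?V p q \<le> entry D S p (q+1)" using sand(2)[of p q] True ne by auto
    also have "\<dots> = ?V p (q+1)" using unchanged[OF nd] by simp
    finally show ?thesis .
  next
    case False
    note u = unchanged[OF False]
    show ?thesis
    proof (cases "?dg p (q+1)")
      case True
      have "?V p q = entry D S p (q+1-1)" using u by simp
      also have "\<dots> \<le> ?V p (q+1)" using sand(1)[of p "q+1"] True by auto
      finally show ?thesis .
    next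
      case F2: False
      have "(p,q+1) \<in> D" using h F2 by auto
      then show ?thesis using u unchanged[OF F2] mono_r by simp
    qed
  qed
  have hd: "?V p q \<le> ?V (p+1) q" if h: "(p+1,q) \<in> insert (i,j) D" for p q
  proof (cases "?dg p q")
    case True
    have ne: "(p,q) \<noteq> (i,j)" using h above_notin[of "p+1" q] by auto
    have nd: "\<not> ?dg (p+1) q" using True by auto
    have "?V p q \<le> entry D S (p+1) q" using sand(2)[of p q] True ne by auto
    also have "\<dots> = ?V (p+1) q" using unchanged[OF nd] by simp
    finally show ?thesis .
  next
    case False
    note u = unchanged[OF False]
    show ?thesis
    proof (cases "?dg (p+1) q")
      case True
      have "?V p q = entry D S (p+1-1) q" using u by simp
      also have "\<dots> \<le> ?V (p+1) q" using sand(1)[of "p+1" q] True by auto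
      finally show ?thesis .
    next
      case F2: False
      have "(p+1,q) \<in> D" using h F2 by auto
      then show ?thesis using u unchanged[OF F2] mono_d by simp
    qed
  qed
  show ?thesis unfolding rpp_def using nn hr hd by blast
qed

lemma rsum_same:
  assumes "\<not> (i \<le> a \<and> j \<le> b)"
  shows "rsum (insert (i,j) D) T a b = rsum D T a b"
  unfolding rsum_def
proof (intro sum.cong refl)
  fix k l assume "k \<in> {1..a}" "l \<in> {1..b}"
  then have "(k,l) \<noteq> (i,j)" using assms by auto
  then show "entry (insert (i,j) D) T k l = entry D T k l" by (auto simp: entry_def)
qed

lemma border_other:
  assumes "(a,b) \<in> insert (i,j) D" "(a+1,b+1) \<notin> insert (i,j) D" "(a,b) \<noteq> (i,j)"
  shows "(a,b) \<in> D" "(a+1,b+1) \<notin> D"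
    "dsum (insert (i,j) D) (toggle_step D S i j x) a b = dsum D S a b"
    "rsum (insert (i,j) D) T a b = rsum D T a b"
proof -
  show abD: "(a,b) \<in> D" using assms by auto
  show "(a+1,b+1) \<notin> D" using assms by auto
  have nij: "\<not> (i \<le> a \<and> j \<le> b)" using above_notin abD by auto
  then show "rsum (insert (i,j) D) T a b = rsum D T a b" by (rule rsum_same)
  show "dsum (insert (i,j) D) (toggle_step D S i j x) a b = dsum D S a b"
    unfolding dsum_def
  proof (intro sum.cong refl unchanged notI)
    fix k assume k: "k \<in> {..<min a b}"
      and dg: "(a-k,b-k) \<in> insert (i,j) D \<and> a-k \<le> i \<and> b-k \<le> j \<and> i - (a-k) = j - (b-k)"
    then have "a+1 \<le> i \<and> b+1 \<le> j" using nij by auto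
    then have "(a+1,b+1) \<in> insert (i,j) D" by (intro below_in) auto
    then show False using assms by auto
  qed
qed

lemma corner_diag:
  assumes IH: "\<And>a b. (a,b) \<in> D \<Longrightarrow> (a+1,b+1) \<notin> D \<Longrightarrow> dsum D S a b = int (rsum D T a b)"
  and xT: "x = T i j"
  shows "dsum (insert (i,j) D) (toggle_step D S i j x) i j = int (rsum (insert (i,j) D) T i j)"
proof -
  let ?V = "entry (insert (i,j) D) (toggle_step D S i j x)"
  let ?a = "\<lambda>k. entry D S (i-k) (j-k+1)"
  let ?g = "\<lambda>k. entry D S (i-k+1) (j-k)"
  let ?b = "\<lambda>k. entry D S (i-k) (j-k)"
  have "min i j \<noteq> 0" using ij_pos by simp
  then obtain n where m: "min i j = Suc n" using not0_implies_Suc by blast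
  have d1: "dsum (insert (i,j) D) (toggle_step D S i j x) i j = ?V i j + (\<Sum>k<n. ?V (i - Suc k) (j - Suc k))"
    unfolding dsum_def m by (simp only: sum.lessThan_Suc_shift diff_zero)
  have a1: "?a 1 = entry D S (i-1) j" using ij_pos by simp
  have g1: "?g 1 = entry D S i (j-1)" using ij_pos by simp
  have d2: "?V i j = max (?a 1) (?g 1) + int x" unfolding a1 g1 by (rule corner_val)
  have d3: "(\<Sum>k<n. ?V (i - Suc k) (j - Suc k)) = (\<Sum>k<n. max (?a (Suc (Suc k))) (?g (Suc (Suc k))) + min (?a (Suc k)) (?g (Suc k)) - ?b (Suc k))"
  proof (intro sum.cong refl)
    fix k assume "k \<in> {..<n}"
    then have kk: "1 \<le> Suc k" "Suc k < min i j" using m by auto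
    have eqk: "Suc k + 1 = Suc (Suc k)" by simp
    from interior_val[OF kk] show "?V (i - Suc k) (j - Suc k) = max (?a (Suc (Suc k))) (?g (Suc (Suc k))) + min (?a (Suc k)) (?g (Suc k)) - ?b (Suc k)"
      unfolding eqk .
  qed
  have eend: "max (?a (Suc n)) (?g (Suc n)) = ?a (Suc n) + ?g (Suc n)"
  proof (cases "i \<le> j")
    case True
    then have "i = Suc n" using m by simp
    then have "?a (Suc n) = 0" using v0 by simp
    then show ?thesis using vnn by simp
  next
    case False
    then have "j = Suc n" using m by simp
    then have "?g (Suc n) = 0" using v0 by simp
    then show ?thesis using vnn by simp
  qed
  have A: "dsum D S (i-1) j = (\<Sum>k<Suc n. ?a (Suc k))"
  proof -
    have "(\<Sum>k<Suc n. ?a (Suc k)) = (\<Sum>k<min (i-1) j. ?a (Suc k))"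
    proof (rule sum_extend)
      show "min (i-1) j \<le> Suc n" using m by auto
      fix k assume "min (i - 1) j \<le> k" "k < Suc n"
      then have "i - Suc k = 0" using m by auto
      then show "?a (Suc k) = 0" using v0 by simp
    qed
    also have "\<dots> = dsum D S (i-1) j" unfolding dsum_def
      by (intro sum.cong refl) (auto simp: Suc_diff_Suc)
    finally show ?thesis by simp
  qed
  have G: "dsum D S i (j-1) = (\<Sum>k<Suc n. ?g (Suc k))"
  proof -
    have "(\<Sum>k<Suc n. ?g (Suc k)) = (\<Sum>k<min i (j-1). ?g (Suc k))"
    proof (rule sum_extend)
      show "min i (j-1) \<le> Suc n" using m by auto
      fix k assume "min i (j-1) \<le> k" "k < Suc n"
      then have "j - Suc k = 0" using m by auto
      then show "?g (Suc k) = 0" using v0 by simp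
    qed
    also have "\<dots> = dsum D S i (j-1)" unfolding dsum_def
      by (intro sum.cong refl) (auto simp: Suc_diff_Suc)
    finally show ?thesis by simp
  qed
  have B: "dsum D S (i-1) (j-1) = (\<Sum>k<n. ?b (Suc k))"
  proof -
    have "min (i-1) (j-1) = n" using m by auto
    then show ?thesis unfolding dsum_def by (intro sum.cong refl) auto
  qed
  have rA: "dsum D S (i-1) j = int (rsum D T (i-1) j)"
  proof (cases "i = 1")
    case True then show ?thesis by (simp add: dsum_def rsum_def)
  next
    case False
    then show ?thesis using ij_pos by (intro IH below_inD above_notin) auto
  qed
  have rG: "dsum D S i (j-1) = int (rsum D T i (j-1))"
  proof (cases "j = 1")
    case True then show ?thesis by (simp add: dsum_def rsum_def)
  next
    case False
    then show ?thesis using ij_pos by (intro IH below_inD above_notin) auto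
  qed
  have rB: "dsum D S (i-1) (j-1) = int (rsum D T (i-1) (j-1))"
  proof (cases "i = 1 \<or> j = 1")
    case True then show ?thesis by (auto simp add: dsum_def rsum_def)
  next
    case False
    then show ?thesis using ij_pos nin by (intro IH below_inD) auto
  qed
  have s1: "rsum (insert (i,j) D) T (i-1) j = rsum D T (i-1) j" using ij_pos by (intro rsum_same) auto
  have s2: "rsum (insert (i,j) D) T i (j-1) = rsum D T i (j-1)" using ij_pos by (intro rsum_same) auto
  have s3: "rsum (insert (i,j) D) T (i-1) (j-1) = rsum D T (i-1) (j-1)" using ij_pos by (intro rsum_same) auto
  obtain i' j' where ij: "i = Suc i'" "j = Suc j'" using ij_pos by (metis Suc_le_D One_nat_def)
  have rr: "rsum (insert (i,j) D) T i j + rsum (insert (i,j) D) T (i-1) (j-1)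
     = rsum (insert (i,j) D) T (i-1) j + rsum (insert (i,j) D) T i (j-1) + x"
    unfolding rsum_def ij using rect_rec[of "entry (insert (Suc i', Suc j') D) T" i' j'] xT ij
    by (simp add: entry_def)
  have tel: "max (?a 1) (?g 1) + (\<Sum>k<n. max (?a (Suc (Suc k))) (?g (Suc (Suc k))) + min (?a (Suc k)) (?g (Suc k)) - ?b (Suc k))
       = (\<Sum>k<n. ?a (Suc k) + ?g (Suc k)) - (\<Sum>k<n. ?b (Suc k)) + max (?a (Suc n)) (?g (Suc n))"
    by (rule telescope)
  have "dsum (insert (i,j) D) (toggle_step D S i j x) i j
     = (\<Sum>k<Suc n. ?a (Suc k)) + (\<Sum>k<Suc n. ?g (Suc k)) - (\<Sum>k<n. ?b (Suc k)) + int x"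
    unfolding d1 d2 d3 using tel eend by (simp add: sum.distrib)
  also have "\<dots> = int (rsum (insert (i,j) D) T i j)"
    using A G B rA rG rB s1 s2 s3 rr by linarith
  finally show ?thesis .
qed

end


lemma step_tinv:
  assumes I: "tinv T D S" and nin: "(i,j) \<notin> D" and dc': "dc (insert (i,j) D)"
  shows "tinv T (insert (i,j) D) (toggle_step D S i j (T i j))"
proof -
  have dcD: "dc D" and rppD: "rpp D S"
    and IH: "\<And>a b. (a,b) \<in> D \<Longrightarrow> (a+1,b+1) \<notin> D \<Longrightarrow> dsum D S a b = int (rsum D T a b)"
    using I by (auto simp: tinv_def)
  have r: "rpp (insert (i,j) D) (toggle_step D S i j (T i j))" by (rule rpp_new[OF dcD rppD nin dc'])
  have b: "dsum (insert (i,j) D) (toggle_step D S i j (T i j)) a b = int (rsum (insert (i,j) D) T a b)"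
    if ab: "(a,b) \<in> insert (i,j) D" "(a+1,b+1) \<notin> insert (i,j) D" for a b
  proof (cases "(a,b) = (i,j)")
    case True
    then show ?thesis using corner_diag[OF dcD rppD nin dc' IH refl] by simp
  next
    case False
    note bo = border_other[OF dcD rppD nin dc' ab False]
    show ?thesis using bo IH[OF bo(1) bo(2)] by simp
  qed
  show ?thesis unfolding tinv_def using dc' r b by blast
qed

definition Rw :: "nat list \<Rightarrow> nat \<Rightarrow> (nat \<times> nat) set" where
  "Rw lam r = {(p,q). 1 \<le> p \<and> p \<le> r \<and> 1 \<le> q \<and> q \<le> lam!(p-1)}"

lemma dec: "is_partition lam \<Longrightarrow> p' \<le> p \<Longrightarrow> p < length lam \<Longrightarrow> lam!p \<le> lam!p'"
  unfolding is_partition_def using sorted_rev_nth_mono by blast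

lemma dc_E:
  assumes P: "is_partition lam" and i: "1 \<le> i" "i \<le> length lam" and c: "c \<le> lam!(i-1)"
  shows "dc (Rw lam (i-1) \<union> ({i} \<times> {1..c}))"
  unfolding dc_def
proof (intro allI impI conjI)
  fix p q assume h: "(p,q) \<in> Rw lam (i-1) \<union> ({i} \<times> {1..c})"
  then show "1 \<le> p" "1 \<le> q" using i by (auto simp: Rw_def)
  fix p' q' assume h2: "1 \<le> p' \<and> p' \<le> p \<and> 1 \<le> q' \<and> q' \<le> q"
  show "(p',q') \<in> Rw lam (i-1) \<union> ({i} \<times> {1..c})"
  proof (cases "(p,q) \<in> Rw lam (i-1)")
    case True
    then have "q \<le> lam!(p-1)" "1 \<le> p" "p \<le> i-1" by (auto simp: Rw_def)
    moreover have "lam!(p-1) \<le> lam!(p'-1)" using dec[OF P, of "p'-1" "p-1"] h2 i \<open>p \<le> i-1\<close> by auto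
    ultimately show ?thesis using h2 by (auto simp: Rw_def)
  next
    case False
    then have pq: "p = i" "q \<le> c" using h by auto
    show ?thesis
    proof (cases "p' = i")
      case True then show ?thesis using pq h2 by auto
    next
      case False
      then have "p' \<le> i - 1" using pq h2 by auto
      moreover have "lam!(i-1) \<le> lam!(p'-1)" using dec[OF P, of "p'-1" "i-1"] h2 i pq by auto
      ultimately show ?thesis using h2 pq c by (auto simp: Rw_def)
    qed
  qed
qed

lemma row_fold:
  assumes P: "is_partition lam" and i: "1 \<le> i" "i \<le> length lam" and I: "tinv T (Rw lam (i-1)) S"
  shows "c \<le> lam!(i-1) \<Longrightarrow> \<exists>S'. fold (\<lambda>(i, j) (D, S). (insert (i, j) D, toggle_step D S i j (T i j)))
            (map (\<lambda>j. (i,j)) [1..<c+1]) (Rw lam (i-1), S) = (Rw lam (i-1) \<union> ({i} \<times> {1..c}), S')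
          \<and> tinv T (Rw lam (i-1) \<union> ({i} \<times> {1..c})) S'"
proof (induction c)
  case 0
  have "Rw lam (i-1) \<union> ({i} \<times> {1..(0::nat)}) = Rw lam (i-1)" by auto
  then show ?case using I by simp
next
  case (Suc c)
  then obtain S' where f: "fold (\<lambda>(i, j) (D, S). (insert (i, j) D, toggle_step D S i j (T i j)))
            (map (\<lambda>j. (i,j)) [1..<c+1]) (Rw lam (i-1), S) = (Rw lam (i-1) \<union> ({i} \<times> {1..c}), S')"
     and t: "tinv T (Rw lam (i-1) \<union> ({i} \<times> {1..c})) S'" by auto
  let ?E = "Rw lam (i-1) \<union> ({i} \<times> {1..c})"
  have ins: "insert (i, Suc c) ?E = Rw lam (i-1) \<union> ({i} \<times> {1..Suc c})" by auto
  have nin: "(i, Suc c) \<notin> ?E" by (auto simp: Rw_def)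
  have dc': "dc (insert (i, Suc c) ?E)" unfolding ins using dc_E[OF P i Suc.prems] .
  have u: "[1..<Suc c + 1] = [1..<c+1] @ [Suc c]" by simp
  show ?case
    using step_tinv[OF t nin dc'] f unfolding u ins[symmetric] by simp
qed

lemma rows_fold:
  assumes P: "is_partition lam"
  shows "r \<le> length lam \<Longrightarrow> \<exists>S. fold (\<lambda>(i, j) (D, S). (insert (i, j) D, toggle_step D S i j (T i j)))
     (concat (map (\<lambda>i. map (\<lambda>j. (i, j)) [1..<lam ! (i - 1) + 1]) [1..<r + 1])) ({}, (\<lambda>_ _. 0))
     = (Rw lam r, S) \<and> tinv T (Rw lam r) S"
proof (induction r)
  case 0
  have "Rw lam 0 = {}" by (auto simp: Rw_def)
  moreover have "tinv T {} (\<lambda>_ _. 0)"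
    by (auto simp: tinv_def dc_def rpp_def entry_def)
  ultimately show ?case by simp
next
  case (Suc r)
  then obtain S where f: "fold (\<lambda>(i, j) (D, S). (insert (i, j) D, toggle_step D S i j (T i j)))
     (concat (map (\<lambda>i. map (\<lambda>j. (i, j)) [1..<lam ! (i - 1) + 1]) [1..<r + 1])) ({}, (\<lambda>_ _. 0))
     = (Rw lam r, S)" and t: "tinv T (Rw lam r) S" by auto
  have i: "1 \<le> Suc r" "Suc r \<le> length lam" using Suc.prems by auto
  obtain S' where f2: "fold (\<lambda>(i, j) (D, S). (insert (i, j) D, toggle_step D S i j (T i j)))
            (map (\<lambda>j. (Suc r,j)) [1..<lam!r+1]) (Rw lam r, S) = (Rw lam r \<union> ({Suc r} \<times> {1..lam!r}), S')
          \<and> tinv T (Rw lam r \<union> ({Suc r} \<times> {1..lam!r})) S'"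
    using row_fold[OF P i, of T S "lam!r"] t by auto
  have R: "Rw lam r \<union> ({Suc r} \<times> {1..lam!r}) = Rw lam (Suc r)"
    by (auto simp: Rw_def le_Suc_eq)
  have u: "[1..<Suc r + 1] = [1..<r+1] @ [Suc r]" by simp
  have "fold (\<lambda>(i, j) (D, S). (insert (i, j) D, toggle_step D S i j (T i j)))
     (concat (map (\<lambda>i. map (\<lambda>j. (i, j)) [1..<lam ! (i - 1) + 1]) [1..<Suc r + 1])) ({}, (\<lambda>_ _. 0))
   = fold (\<lambda>(i, j) (D, S). (insert (i, j) D, toggle_step D S i j (T i j)))
            (map (\<lambda>j. (Suc r,j)) [1..<lam!r+1]) (fold (\<lambda>(i, j) (D, S). (insert (i, j) D, toggle_step D S i j (T i j)))
     (concat (map (\<lambda>i. map (\<lambda>j. (i, j)) [1..<lam ! (i - 1) + 1]) [1..<r + 1])) ({}, (\<lambda>_ _. 0)))"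
    by (simp only: u map_append concat_append fold_append list.map concat.simps append_Nil2 comp_apply diff_Suc_1)
  then show ?case using f f2 unfolding R by simp
qed

theorem proposition2p6:
  fixes lam :: "nat list" and T :: "nat \<Rightarrow> nat \<Rightarrow> nat" and a b :: nat
  assumes "is_partition lam"
    and "border_box lam a b"
  shows "diag_sum lam (toggle lam T) a b = int (rect_sum lam T a b)"
proof -
  obtain S where f: "fold (\<lambda>(i, j) (D, S). (insert (i, j) D, toggle_step D S i j (T i j)))
     (box_order lam) ({}, (\<lambda>_ _. 0)) = (Rw lam (length lam), S)" and t: "tinv T (Rw lam (length lam)) S"
    using rows_fold[OF assms(1), of "length lam" T] unfolding box_order_def by auto
  have bx: "Rw lam (length lam) = boxes lam" by (auto simp: Rw_def boxes_def)
  have tg: "toggle lam T = S" unfolding toggle_def f by simp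
  have "dsum (boxes lam) S a b = int (rsum (boxes lam) T a b)"
    using t assms(2) unfolding bx tinv_def border_box_def by blast
  then show ?thesis unfolding tg dsum_def rsum_def diag_sum_def rect_sum_def .
qed

end
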